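(* Let $(X,d)$ be a complete metric space and let $T\colon X\to X$ satisfy (CM): for all $x,y\in X$, $x\neq y$ implies $d(Tx,Ty)<\frac{1}{2}\{d(x,Tx)+d(y,Ty)\}$. Then the following are equivalent: (i) $\lim_{n\to\infty}d(T^nx,T^{n+1}x)=0$ for every $x\in X$; (ii) $T$ has a unique fixed point $z\in X$ and the sequence $(T^nx)_n$ converges to $z$ for every $x\in X$.
   Context: $T^n$ denotes the $n$-fold composition of $T$. *)

theory Defs
  imports "HOL-Analysis.Analysis"
begin

end

theory Submission
  imports Defs
begin

lemma CM_le:
  fixes T :: "'a::metric_space \<Rightarrow> 'a"
  assumes CM: "\<And>x y. x \<noteq> y \<Longrightarrow> dist (T x) (T y) < (dist x (T x) + dist y (T y)) / 2"
  shows "dist (T x) (T y) \<le> (dist x (T x) + dist y (T y)) / 2"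
proof (cases "x = y")
  case True thus ?thesis by simp
next
  case False thus ?thesis using CM[of x y] by simp
qed

theorem theorem5p2:
  fixes T :: "'a::complete_space \<Rightarrow> 'a"
  assumes CM: "\<And>x y. x \<noteq> y \<Longrightarrow> dist (T x) (T y) < (dist x (T x) + dist y (T y)) / 2"
  shows "(\<forall>x. (\<lambda>n. dist ((T ^^ n) x) ((T ^^ Suc n) x)) \<longlonglongrightarrow> 0)
     \<longleftrightarrow> (\<exists>!z. T z = z) \<and> (\<exists>z. T z = z \<and> (\<forall>x. (\<lambda>n. (T ^^ n) x) \<longlonglongrightarrow> z))"
proof
  assume R: "(\<exists>!z. T z = z) \<and> (\<exists>z. T z = z \<and> (\<forall>x. (\<lambda>n. (T ^^ n) x) \<longlonglongrightarrow> z))"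
  then obtain z where z: "\<forall>x. (\<lambda>n. (T ^^ n) x) \<longlonglongrightarrow> z" by blast
  show "\<forall>x. (\<lambda>n. dist ((T ^^ n) x) ((T ^^ Suc n) x)) \<longlonglongrightarrow> 0"
  proof
    fix x
    have a: "(\<lambda>n. (T ^^ n) x) \<longlonglongrightarrow> z" using z by blast
    have b: "(\<lambda>n. (T ^^ Suc n) x) \<longlonglongrightarrow> z" using LIMSEQ_Suc[OF a] .
    have "(\<lambda>n. dist ((T ^^ n) x) ((T ^^ Suc n) x)) \<longlonglongrightarrow> dist z z"
      by (intro tendsto_dist a b)
    thus "(\<lambda>n. dist ((T ^^ n) x) ((T ^^ Suc n) x)) \<longlonglongrightarrow> 0" by simp
  qed
next
  assume L: "\<forall>x. (\<lambda>n. dist ((T ^^ n) x) ((T ^^ Suc n) x)) \<longlonglongrightarrow> 0"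
  have G: "\<And>x y. dist (T x) (T y) \<le> (dist x (T x) + dist y (T y)) / 2"
    using CM_le[OF CM] by blast
  have uniq: "\<And>z w. T z = z \<Longrightarrow> T w = w \<Longrightarrow> z = w"
  proof (rule ccontr)
    fix z w assume "T z = z" "T w = w" "z \<noteq> w"
    then have "dist (T z) (T w) < 0" using CM[of z w] by simp
    thus False by simp
  qed
  have conv: "\<exists>z. T z = z \<and> (\<lambda>n. (T ^^ n) x) \<longlonglongrightarrow> z" for x
  proof -
    define X where "X n = (T ^^ n) x" for n
    define a where "a n = dist (X n) (X (Suc n))" for n
    have a0: "a \<longlonglongrightarrow> 0" using L unfolding a_def X_def by blast
    have XS: "X (Suc n) = T (X n)" for n by (simp add: X_def)
    have bound: "dist (X n) (X m) \<le> 2 * (a n + a m)" for n m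
    proof -
      have "dist (X n) (X m) \<le> dist (X n) (X (Suc n)) + dist (X (Suc n)) (X (Suc m)) + dist (X (Suc m)) (X m)"
        by (smt (verit) dist_triangle)
      moreover have "dist (X (Suc n)) (X (Suc m)) \<le> (a n + a m) / 2"
        using G[of "X n" "X m"] unfolding XS a_def by (simp add: XS)
      moreover have "dist (X (Suc m)) (X m) = a m" by (simp add: a_def dist_commute)
      moreover have "a n \<ge> 0" "a m \<ge> 0" by (auto simp: a_def)
      ultimately show ?thesis unfolding a_def by argo
    qed
    have "Cauchy X"
    proof (rule metric_CauchyI)
      fix e :: real assume e: "e > 0"
      then obtain M where M: "\<forall>n\<ge>M. norm (a n - 0) < e / 5"
        using a0 unfolding LIMSEQ_iff by (meson divide_pos_pos zero_less_numeral)
      show "\<exists>M. \<forall>m\<ge>M. \<forall>n\<ge>M. dist (X m) (X n) < e"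
      proof (intro exI[of _ M] allI impI)
        fix m n assume "m \<ge> M" "n \<ge> M"
        then have "a m < e/5" "a n < e/5" using M by auto
        then have h: "2 * (a m + a n) < e" using e by (simp add: distrib_left)
        have "dist (X m) (X n) \<le> 2 * (a m + a n)" by (rule bound)
        then show "dist (X m) (X n) < e" using h by argo
      qed
    qed
    then obtain z where z: "X \<longlonglongrightarrow> z" using Cauchy_convergent_iff convergent_def by blast
    have zs: "(\<lambda>n. X (Suc n)) \<longlonglongrightarrow> z" using LIMSEQ_Suc[OF z] .
    have fb: "dist z (T z) \<le> 2 * dist z (X (Suc n)) + a n" for n
    proof -
      have "dist z (T z) \<le> dist z (X (Suc n)) + dist (X (Suc n)) (T z)" by (rule dist_triangle)
      moreover have "dist (X (Suc n)) (T z) \<le> (a n + dist z (T z)) / 2"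
        using G[of "X n" z] unfolding XS a_def by (simp add: XS)
      ultimately show ?thesis by argo
    qed
    have lim: "(\<lambda>n. 2 * dist z (X (Suc n)) + a n) \<longlonglongrightarrow> 2 * dist z z + 0"
      by (intro tendsto_intros zs a0)
    have "dist z (T z) \<le> 0"
      using lim fb by (intro LIMSEQ_le_const[of _ "0"]) auto
    then have "T z = z" by simp
    then show ?thesis using z unfolding X_def by blast
  qed
  obtain z where z: "T z = z" using conv by blast
  have "\<forall>x. (\<lambda>n. (T ^^ n) x) \<longlonglongrightarrow> z"
  proof
    fix x
    obtain w where "T w = w" "(\<lambda>n. (T ^^ n) x) \<longlonglongrightarrow> w" using conv by blast
    with uniq z show "(\<lambda>n. (T ^^ n) x) \<longlonglongrightarrow> z" by metis
  qed
  then show "(\<exists>!z. T z = z) \<and> (\<exists>z. T z = z \<and> (\<forall>x. (\<lambda>n. (T ^^ n) x) \<longlonglongrightarrow> z))"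
    using z uniq by blast
qed

end
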